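(* Let $\epsilon_1,\epsilon_2$ be independent random variables with the unit Fréchet distribution, $\mathbb P(\epsilon_j\le x)=\exp(-1/x)$ for $x>0$, and fix $c>0$. Define $X_1=\epsilon_1$ and $X_2=\max(cX_1,\epsilon_2)$. For $j=1,2$ let $F_j$ be the (continuous) distribution function of $X_j$, let $Y_j=1/(1-F_j(X_j))$ (so $Y_j$ is exactly unit Pareto), and for a threshold $u>1$ let $Z_j=\log Y_j-\log u$. Let $\mathcal H=\{h:\mathbb R\to\mathbb R,\ h(z)=\max(z,c')+d \text{ for some } c',d\in\mathbb R\}$ and, for $i\neq j$, $$R^\star_{j\mid i}(u)=\inf_{h\in\mathcal H}\mathbb E\big[\,|Z_j-h(Z_i)|\;\big|\;Z_i>0\big].$$ Then $R^\star_{2\mid 1}(u)\to 0$ as $u\to\infty$, while $$\liminf_{u\to\infty}R^\star_{1\mid 2}(u)\ \ge\ \frac{\log 2}{c+1}>0 .$$ In particular $R^\star_{2\mid 1}(u)<R^\star_{1\mid 2}(u)$ for all sufficiently large $u$.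
   Context: $\mathcal H$ is the class of (bivariate) max-linear envelope predictors; $R^\star_{j\mid i}(u)$ is the tail prediction risk of $Z_j$ from $Z_i$ at threshold $u$. *)

theory Defs
  imports "HOL-Probability.Probability"
begin

definition cdf_of :: "'a measure \<Rightarrow> ('a \<Rightarrow> real) \<Rightarrow> real \<Rightarrow> real" where
  "cdf_of M X x = measure M {\<omega> \<in> space M. X \<omega> \<le> x}"

definition pareto_std :: "'a measure \<Rightarrow> ('a \<Rightarrow> real) \<Rightarrow> 'a \<Rightarrow> real" where
  "pareto_std M X \<omega> = 1 / (1 - cdf_of M X (X \<omega>))"

definition tail_Z :: "'a measure \<Rightarrow> ('a \<Rightarrow> real) \<Rightarrow> real \<Rightarrow> 'a \<Rightarrow> real" where
  "tail_Z M X u \<omega> = ln (pareto_std M X \<omega>) - ln u"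

definition envelope_class :: "(real \<Rightarrow> real) set" where
  "envelope_class = {h. \<exists>c' d. h = (\<lambda>z. max z c' + d)}"

text \<open>Tail prediction risk: inf over h of E[|Zj - h(Zi)| | Zi > 0]
  = E[|Zj - h(Zi)| 1{Zi>0}] / P(Zi > 0), computed in ennreal.\<close>
definition tail_risk :: "'a measure \<Rightarrow> ('a \<Rightarrow> real) \<Rightarrow> ('a \<Rightarrow> real) \<Rightarrow> ennreal" where
  "tail_risk M Zj Zi =
     (INF h\<in>envelope_class.
        (\<integral>\<^sup>+ \<omega>. ennreal \<bar>Zj \<omega> - h (Zi \<omega>)\<bar> * indicator {\<omega> \<in> space M. Zi \<omega> > 0} \<omega> \<partial>M)
        / emeasure M {\<omega> \<in> space M. Zi \<omega> > 0})"

end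

theory Submission
  imports Defs "HOL-Real_Asymp.Real_Asymp"
begin


definition gfun :: "real \<Rightarrow> real" where "gfun z = - ln (1 - exp (-1/z))"

lemma g_bounds:
  assumes z: "z > 0"
  shows "ln z \<le> gfun z" "gfun z \<le> ln z + 1/z"
proof -
  have e1: "1 - exp (-1/z) \<le> 1/z" using exp_ge_add_one_self[of "-1/z"] by simp
  have ep: "exp (-1/z) < 1" using z by simp
  have pos: "0 < 1 - exp (-1/z)" using ep by simp
  have "ln (1 - exp (-1/z)) \<le> ln (1/z)" using e1 pos by (subst ln_le_cancel_iff) auto
  then show "ln z \<le> gfun z" using z by (simp add: gfun_def ln_div)
  have "1 + 1/z \<le> exp (1/z)" by (rule exp_ge_add_one_self)
  then have "exp (-1/z) \<le> 1 / (1 + 1/z)"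
    using z by (simp add: exp_minus field_simps)
  also have "\<dots> = z / (z+1)" using z by (simp add: field_simps)
  finally have "1/(z+1) \<le> 1 - exp (-1/z)" using z by (simp add: field_simps)
  then have "ln (1/(z+1)) \<le> ln (1 - exp (-1/z))" using z pos by (subst ln_le_cancel_iff) auto
  then have "gfun z \<le> ln (z+1)" using z by (simp add: gfun_def ln_div)
  also have "ln (z+1) = ln z + ln (1 + 1/z)"
  proof -
    have eq: "z+1 = z * (1 + 1/z)" using z by (simp add: field_simps)
    have pos: "0 < 1 + 1/z" using z by (intro add_pos_pos) auto
    show ?thesis using z pos by (subst eq, subst ln_mult) auto
  qed
  also have "ln (1 + 1/z) \<le> 1/z"
  proof -
    have pos: "0 < 1 + 1/z" using z by (intro add_pos_pos) auto
    show ?thesis using ln_le_minus_one[OF pos] by simp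
  qed
  finally show "gfun z \<le> ln z + 1/z" by simp
qed

definition sfun :: "real \<Rightarrow> real" where "sfun u = 1 / (- ln (1 - 1/u))"

lemma s_props:
  assumes u: "u > 1"
  shows "sfun u > 0" "exp (-1 / sfun u) = 1 - 1/u" "u - 1 \<le> sfun u" "sfun u \<le> u"
    "gfun (sfun u) = ln u"
proof -
  have p: "0 < 1 - 1/u" "1 - 1/u < 1" using u by (auto simp: field_simps)
  have lneg: "ln (1 - 1/u) < 0" using p by simp
  show sp: "sfun u > 0" using lneg by (simp add: sfun_def)
  show ex: "exp (-1 / sfun u) = 1 - 1/u" using p by (simp add: sfun_def)
  have "ln (1 - 1/u) \<le> -1/u" using ln_le_minus_one[of "1-1/u"] p by simp
  then have "1/u \<le> - ln (1 - 1/u)" by simp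
  then show "sfun u \<le> u" unfolding sfun_def using u
    by (simp add: field_simps)
  have "1 - 1/u = (u-1)/u" using u by (simp add: field_simps)
  then have "- ln (1 - 1/u) = ln (u/(u-1))" using u by (simp add: ln_div)
  also have "\<dots> \<le> u/(u-1) - 1" using u by (intro ln_le_minus_one) auto
  also have "\<dots> = 1/(u-1)" using u by (simp add: field_simps)
  finally have "- ln (1 - 1/u) \<le> 1/(u-1)" .
  then show "u - 1 \<le> sfun u" unfolding sfun_def using u lneg
    by (simp add: field_simps)
  show "gfun (sfun u) = ln u" unfolding gfun_def using ex u by (simp add: ln_div)
qed

lemma gfun_less:
  assumes "0 < y" "y < z" shows "gfun y < gfun z"
proof -
  have "-1/y < -1/z" using assms by (simp add: field_simps)
  then have "exp (-1/y) < exp (-1/z)" by simp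
  moreover have "exp (-1/z) < 1" using assms by simp
  ultimately have "1 - exp (-1/z) < 1 - exp (-1/y)" "0 < 1 - exp(-1/z)" by auto
  then have "ln (1 - exp (-1/z)) < ln (1 - exp (-1/y))"
    by (metis ln_less_cancel_iff order.strict_trans)
  then show ?thesis by (simp add: gfun_def)
qed

lemma gfun_le:
  assumes "0 < y" "y \<le> z" shows "gfun y \<le> gfun z"
  using gfun_less[of y z] assms by (cases "y = z") auto

lemma cdf_mono:
  assumes "prob_space M" "X \<in> borel_measurable M" "x \<le> y"
  shows "cdf_of M X x \<le> cdf_of M X y"
proof -
  interpret prob_space M by fact
  have "{\<omega> \<in> space M. X \<omega> \<le> y} \<in> sets M" using assms(2) by measurable
  then show ?thesis unfolding cdf_of_def
    using assms(3) by (intro finite_measure_mono) auto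
qed

lemma tZ_eq:
  assumes "a > 0" "\<forall>x>0. cdf_of M X x = exp (-a/x)" "X \<omega> > 0"
  shows "tail_Z M X u \<omega> = gfun (X \<omega> / a) - ln u"
proof -
  have "cdf_of M X (X \<omega>) = exp (-1 / (X \<omega> / a))" using assms by simp
  then show ?thesis unfolding tail_Z_def pareto_std_def gfun_def
    by (simp add: ln_div)
qed

lemma tZ_set:
  assumes M: "prob_space M" and X: "X \<in> borel_measurable M" and a: "a > 0"
    and F: "\<forall>x>0. cdf_of M X x = exp (-a/x)" and u: "u > 1"
  shows "{\<omega> \<in> space M. tail_Z M X u \<omega> > 0} = {\<omega> \<in> space M. X \<omega> > a * sfun u}"
proof -
  have s: "sfun u > 0" "exp (-1 / sfun u) = 1 - 1/u" "gfun (sfun u) = ln u"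
    using s_props[OF u] by auto
  have "tail_Z M X u \<omega> > 0 \<longleftrightarrow> X \<omega> > a * sfun u" for \<omega>
  proof (cases "X \<omega> > 0")
    case True
    have eq: "tail_Z M X u \<omega> = gfun (X \<omega> / a) - ln u" by (rule tZ_eq[OF a F True])
    have "X \<omega> > a * sfun u \<longleftrightarrow> X \<omega> / a > sfun u" using a by (simp add: field_simps)
    moreover have "X \<omega> / a > sfun u \<longleftrightarrow> gfun (X \<omega> / a) > gfun (sfun u)"
      using gfun_less[of "sfun u" "X \<omega> / a"] gfun_le[of "X \<omega> / a" "sfun u"] s(1) a True
      by (auto simp: not_less[symmetric])
    ultimately show ?thesis using eq s(3) by simp
  next
    case False
    have "cdf_of M X (X \<omega>) \<le> cdf_of M X (a * sfun u)"
      using cdf_mono[OF M X, of "X \<omega>" "a * sfun u"] False a s(1)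
      by (smt (verit) mult_pos_pos)
    also have "\<dots> = exp (-1 / sfun u)" using F a s(1) by (simp add: mult_pos_pos)
    finally have c: "cdf_of M X (X \<omega>) \<le> 1 - 1/u" using s(2) by simp
    have q: "1/u \<le> 1 - cdf_of M X (X \<omega>)" using c by simp
    have up: "0 < 1/u" using u by simp
    have "pareto_std M X \<omega> \<le> u" unfolding pareto_std_def
    proof -
      have "1 / (1 - cdf_of M X (X \<omega>)) \<le> 1 / (1/u)"
      proof (rule divide_left_mono)
        have "0 < 1 - cdf_of M X (X \<omega>)" using q up by linarith
        then show "0 < (1 - cdf_of M X (X \<omega>)) * (1/u)" using up by (rule mult_pos_pos)
      qed (use q in auto)
      then show "1 / (1 - cdf_of M X (X \<omega>)) \<le> u" by simp
    qed
    moreover have "0 < pareto_std M X \<omega>" unfolding pareto_std_def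
    proof -
      have "0 < 1 - cdf_of M X (X \<omega>)" using q up by linarith
      then show "0 < 1 / (1 - cdf_of M X (X \<omega>))" by simp
    qed
    ultimately have "ln (pareto_std M X \<omega>) \<le> ln u" by simp
    then have "\<not> tail_Z M X u \<omega> > 0" unfolding tail_Z_def by simp
    moreover have "\<not> X \<omega> > a * sfun u" using False a s(1) by (smt (verit) mult_pos_pos)
    ultimately show ?thesis by simp
  qed
  then show ?thesis by auto
qed

lemma tZ_prob:
  assumes M: "prob_space M" and X: "X \<in> borel_measurable M" and a: "a > 0"
    and F: "\<forall>x>0. cdf_of M X x = exp (-a/x)" and u: "u > 1"
  shows "measure M {\<omega> \<in> space M. X \<omega> > a * sfun u} = 1/u"
proof -
  interpret prob_space M by fact
  have s: "sfun u > 0" "exp (-1 / sfun u) = 1 - 1/u" using s_props[OF u] by auto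
  have ev: "{\<omega> \<in> space M. X \<omega> \<le> a * sfun u} \<in> events" using X by measurable
  have "{\<omega> \<in> space M. X \<omega> > a * sfun u} = space M - {\<omega> \<in> space M. X \<omega> \<le> a * sfun u}"
    by auto
  then have "measure M {\<omega> \<in> space M. X \<omega> > a * sfun u} = 1 - cdf_of M X (a * sfun u)"
    using prob_compl[OF ev] by (simp add: cdf_of_def)
  also have "\<dots> = 1 - exp (-1 / sfun u)" using F a s(1) by (simp add: mult_pos_pos)
  finally show ?thesis using s(2) by simp
qed




lemma frechet_interval:
  assumes M: "prob_space M" and X: "X \<in> borel_measurable M"
    and F: "\<forall>x>0. measure M {\<omega> \<in> space M. X \<omega> \<le> x} = exp (- 1 / x)"
    and ab: "0 < a" "a \<le> b"
  shows "measure M {\<omega> \<in> space M. a < X \<omega> \<and> X \<omega> \<le> b} = exp (-1/b) - exp (-1/a)"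
proof -
  interpret prob_space M by fact
  have s1: "{\<omega> \<in> space M. X \<omega> \<le> b} \<in> events" using X by measurable
  have s2: "{\<omega> \<in> space M. X \<omega> \<le> a} \<in> events" using X by measurable
  have eq: "{\<omega> \<in> space M. a < X \<omega> \<and> X \<omega> \<le> b} =
        {\<omega> \<in> space M. X \<omega> \<le> b} - {\<omega> \<in> space M. X \<omega> \<le> a}" by auto
  have sub: "{\<omega> \<in> space M. X \<omega> \<le> a} \<subseteq> {\<omega> \<in> space M. X \<omega> \<le> b}" using ab by auto
  have "measure M ({\<omega> \<in> space M. X \<omega> \<le> b} - {\<omega> \<in> space M. X \<omega> \<le> a}) =
      measure M {\<omega> \<in> space M. X \<omega> \<le> b} - measure M {\<omega> \<in> space M. X \<omega> \<le> a}"
    by (rule finite_measure_Diff[OF s1 s2 sub])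
  then have "measure M {\<omega> \<in> space M. a < X \<omega> \<and> X \<omega> \<le> b} =
      measure M {\<omega> \<in> space M. X \<omega> \<le> b} - measure M {\<omega> \<in> space M. X \<omega> \<le> a}"
    by (simp only: eq)
  then show ?thesis using F ab by simp
qed

lemma frechet_tail:
  assumes M: "prob_space M" and X: "X \<in> borel_measurable M"
    and F: "\<forall>x>0. measure M {\<omega> \<in> space M. X \<omega> \<le> x} = exp (- 1 / x)"
    and a: "0 < a"
  shows "measure M {\<omega> \<in> space M. a < X \<omega>} = 1 - exp (-1/a)"
proof -
  interpret prob_space M by fact
  have ev: "{\<omega> \<in> space M. X \<omega> \<le> a} \<in> events" using X by measurable
  have "{\<omega> \<in> space M. a < X \<omega>} = space M - {\<omega> \<in> space M. X \<omega> \<le> a}" by auto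
  then show ?thesis using prob_compl[OF ev] F a by simp
qed

locale frech = prob_space M for M :: "'a measure" +
  fixes e1 e2 :: "'a \<Rightarrow> real" and c :: real
  assumes m1[measurable]: "e1 \<in> borel_measurable M" and m2[measurable]: "e2 \<in> borel_measurable M"
    and ind: "indep_var borel e1 borel e2"
    and F1: "\<forall>x>0. measure M {\<omega> \<in> space M. e1 \<omega> \<le> x} = exp (- 1 / x)"
    and F2: "\<forall>x>0. measure M {\<omega> \<in> space M. e2 \<omega> \<le> x} = exp (- 1 / x)"
    and cpos: "c > 0"
begin

definition X2 where "X2 = (\<lambda>\<omega>. max (c * e1 \<omega>) (e2 \<omega>))"

lemma X2m[measurable]: "X2 \<in> borel_measurable M" unfolding X2_def by measurable

lemma indep_prob:
  assumes "A \<in> sets borel" "B \<in> sets borel"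
  shows "prob {\<omega> \<in> space M. e1 \<omega> \<in> A \<and> e2 \<omega> \<in> B} =
         prob {\<omega> \<in> space M. e1 \<omega> \<in> A} * prob {\<omega> \<in> space M. e2 \<omega> \<in> B}"
proof -
  have "prob ((\<lambda>x. (e1 x, e2 x)) -` (A \<times> B) \<inter> space M) =
        prob (e1 -` A \<inter> space M) * prob (e2 -` B \<inter> space M)"
    by (rule indep_varD[OF ind assms])
  moreover have "(\<lambda>x. (e1 x, e2 x)) -` (A \<times> B) \<inter> space M = {\<omega> \<in> space M. e1 \<omega> \<in> A \<and> e2 \<omega> \<in> B}"
    "e1 -` A \<inter> space M = {\<omega> \<in> space M. e1 \<omega> \<in> A}" "e2 -` B \<inter> space M = {\<omega> \<in> space M. e2 \<omega> \<in> B}"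
    by auto
  ultimately show ?thesis by simp
qed

lemma cdf1: "\<forall>x>0. cdf_of M e1 x = exp (- 1 / x)"
  using F1 by (simp add: cdf_of_def)

lemma cdf2: "\<forall>x>0. cdf_of M X2 x = exp (- (c+1) / x)"
proof (intro allI impI)
  fix x :: real assume x: "x > 0"
  have "{\<omega> \<in> space M. X2 \<omega> \<le> x} = {\<omega> \<in> space M. e1 \<omega> \<in> {..x/c} \<and> e2 \<omega> \<in> {..x}}"
    unfolding X2_def using cpos by (auto simp: field_simps)
  then have "cdf_of M X2 x = prob {\<omega> \<in> space M. e1 \<omega> \<in> {..x/c}} * prob {\<omega> \<in> space M. e2 \<omega> \<in> {..x}}"
    unfolding cdf_of_def using indep_prob[of "{..x/c}" "{..x}"] by simp
  also have "\<dots> = exp (-1/(x/c)) * exp (-1/x)" using F1 F2 x cpos by simp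
  also have "\<dots> = exp (-1/(x/c) + -1/x)" by (simp only: exp_add)
  also have "-1/(x/c) + -1/x = - (c+1) / x" using x cpos by (simp add: field_simps)
  finally show "cdf_of M X2 x = exp (- (c+1) / x)" .
qed

end



lemma key21:
  fixes c s x y :: real
  assumes c: "c > 0" and s: "s > 0" and x: "x > s"
  shows "\<bar>gfun (max (c*x) y / (c+1)) - gfun x - ln (c/(c+1))\<bar>
     \<le> 1/((c/(c+1))* s) + (if y > c* s then ln (y/(c* s)) else 0)"
proof -
  define k where "k = c/(c+1)"
  have x0: "x > 0" using s x by simp
  have k0: "k > 0" "k \<le> 1" using c by (auto simp: k_def field_simps)
  have gx: "ln x \<le> gfun x" "gfun x \<le> ln x + 1/x" using g_bounds[OF x0] by auto
  have lnk: "ln k = ln c - ln (c+1)" using c by (simp add: k_def ln_div)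
  have i1: "1/x \<le> 1/(k*x)" using k0 x0 by (simp add: field_simps)
  have i2: "1/(k*x) \<le> 1/(k* s)" using k0 x s by (simp add: field_simps mult_left_mono)
  have lnxs: "ln s < ln x" using s x by simp
  have E: "0 \<le> (if y > c* s then ln (y/(c* s)) else 0)"
    using c s by (auto simp: field_simps)
  have "\<bar>gfun (max (c*x) y / (c+1)) - gfun x - ln k\<bar>
     \<le> 1/(k* s) + (if y > c * s then ln (y/(c * s)) else 0)"
  proof (cases "y \<le> c*x")
    case True
    then have m: "max (c*x) y / (c+1) = k*x" by (simp add: k_def)
    have kx: "k*x > 0" using k0 x0 by simp
    have gk: "ln (k*x) \<le> gfun (k*x)" "gfun (k*x) \<le> ln (k*x) + 1/(k*x)"
      using g_bounds[OF kx] by auto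
    have "ln (k*x) = ln k + ln x" using k0 x0 by (simp add: ln_mult)
    then have "\<bar>gfun (k*x) - gfun x - ln k\<bar> \<le> 1/(k*x)" using gk gx i1 by linarith
    then show ?thesis using i2 E by (subst m) linarith
  next
    case False
    then have y: "y > c*x" by simp
    then have m: "max (c*x) y / (c+1) = y/(c+1)" by simp
    have cx: "c*x > 0" using c x0 by simp
    have y0: "y > 0" using y cx by linarith
    have ycs: "y > c* s" using y c x by (smt (verit) mult_strict_left_mono)
    define z where "z = y/(c+1)"
    have z0: "z > 0" using y0 c by (simp add: z_def)
    have gz: "ln z \<le> gfun z" "gfun z \<le> ln z + 1/z" using g_bounds[OF z0] by auto
    have lnz: "ln z = ln y - ln (c+1)" using y0 c by (simp add: z_def ln_div)
    have "c*x/(c+1) < y/(c+1)" using y c by (intro divide_strict_right_mono) auto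
    then have zkx: "k*x < z" by (simp add: z_def k_def)
    have kxp: "0 < k*x" using k0 x0 by simp
    have iz: "1/z \<le> 1/(k*x)" by (rule frac_le) (use zkx kxp in auto)
    have "ln (c*x) < ln y" using y cx by simp
    then have lyx: "ln c + ln x < ln y" using c x0 by (simp add: ln_mult)
    have lycs: "ln (y/(c* s)) = ln y - ln c - ln s" using y0 c s by (simp add: ln_div ln_mult)
    have "\<bar>gfun z - gfun x - ln k\<bar> \<le> 1/(k* s) + ln (y/(c* s))"
      using gz gx lnz lnk lyx lycs lnxs iz i1 i2 by linarith
    then show ?thesis using ycs by (subst m) (simp add: z_def)
  qed
  then show ?thesis by (simp add: k_def)
qed

lemma ln_count:
  assumes r: "r > 0"
  shows "ennreal (if y > r then ln (y/r) else 0)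
     \<le> (\<Sum>n. ennreal (if r * exp (real n) < y then 1 else 0))"
proof (cases "y > r")
  case False then show ?thesis by simp
next
  case True
  define L where "L = ln (y/r)"
  have L0: "L > 0" using True r by (simp add: L_def)
  define N where "N = nat \<lceil>L\<rceil>"
  have lt: "r * exp (real n) < y" if "n < N" for n
  proof -
    have "int n < \<lceil>L\<rceil>" using that by (simp add: N_def)
    then have "real n < L" by (simp add: less_ceiling_iff)
    then have "exp (real n) < exp (ln (y/r))" unfolding L_def by simp
    then have "exp (real n) < y/r" using True r by simp
    then show ?thesis using r by (simp add: field_simps)
  qed
  have "ennreal L \<le> ennreal (real N)" unfolding N_def using L0
    by (intro ennreal_leI) linarith
  also have "\<dots> = (\<Sum>n<N. ennreal (if r * exp (real n) < y then 1 else 0))"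
    using lt by (simp add: ennreal_of_nat_eq_real_of_nat[symmetric])
  also have "\<dots> \<le> (\<Sum>n. ennreal (if r * exp (real n) < y then 1 else 0))"
    by (intro sum_le_suminf) auto
  finally show ?thesis using True by (simp add: L_def)
qed

lemma exp_diff_lower:
  fixes w :: real
  assumes "w \<ge> 0" shows "exp (-w) - exp (-2*w) \<ge> exp (-2*w) * w"
proof -
  have "exp (-w) = exp (-2*w) * exp w" by (simp add: exp_add[symmetric])
  moreover have "1 + w \<le> exp w" by simp
  ultimately have "exp (-w) \<ge> exp (-2*w) * (1 + w)" by (simp add: mult_left_mono)
  then show ?thesis by (simp add: algebra_simps)
qed

lemma PA_bound:
  fixes c u s :: real
  assumes c: "c > 0" and u: "u \<ge> 2" and s: "s > 0" "exp (-1/s) = 1 - 1/u" "s \<le> u"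
  shows "exp (-1/((c+1)* s)) * (exp (-1/(2*((c+1)* s)/c)) - exp (-1/((c+1)* s/c)))
         \<ge> (c/(c+1)) / (4*u)"
proof -
  have cs: "(c+1)* s > 0" "s + c * s > 0" using c s by (simp_all add: add_pos_pos)
  define w where "w = c/(2*((c+1)* s))"
  have w0: "w \<ge> 0" using c s by (simp add: w_def)
  have e1: "-1/(2*((c+1)* s)/c) = -w" using c s cs by (simp add: w_def field_simps)
  have e2: "-1/((c+1)* s/c) = -2*w" using c s cs by (simp add: w_def field_simps)
  have "exp (-1/((c+1)* s)) * exp (-2*w) = exp (-1/((c+1)* s) + -2*w)" by (rule exp_add[symmetric])
  also have "-1/((c+1)* s) + -2*w = -1/s"
  proof -
    have "2*w = c/((c+1)* s)" by (simp add: w_def)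
    then have "-1/((c+1)* s) + -2*w = -(1+c)/((c+1)* s)" by (simp add: diff_divide_distrib add_divide_distrib)
    also have "\<dots> = -1/s"
    proof -
      have "s + c * s > 0" using c s by (simp add: add_pos_pos)
      then have nz: "1 + c \<noteq> 0" "c + 1 \<noteq> 0" "s \<noteq> 0" "s + c * s \<noteq> 0" using c s by auto
      then show ?thesis by (simp add: field_simps)
    qed
    finally show ?thesis .
  qed
  finally have pe: "exp (-1/((c+1)* s)) * exp (-2*w) = 1 - 1/u" using s by simp
  have "exp (-1/((c+1)* s)) * (exp (-w) - exp (-2*w)) \<ge> exp (-1/((c+1)* s)) * (exp (-2*w) * w)"
    using exp_diff_lower[OF w0] by (intro mult_left_mono) auto
  also have "exp (-1/((c+1)* s)) * (exp (-2*w) * w) = (1 - 1/u) * w" using pe by (simp add: mult.assoc[symmetric])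
  also have "(1 - 1/u) * w \<ge> (1/2) * w" using u w0 by (intro mult_right_mono) (auto simp: field_simps)
  also have "(1/2) * w = (c/(c+1)) / (4* s)" unfolding w_def using c s by simp
  also have "(c/(c+1)) / (4* s) \<ge> (c/(c+1)) / (4*u)" using c s
    by (intro divide_left_mono) auto
  finally show ?thesis unfolding e1 e2 by simp
qed

lemma PB_bound:
  fixes c u s :: real
  assumes c: "c > 0" and u: "u \<ge> 2" and s: "s > 0" "exp (-1/s) = 1 - 1/u" "s \<le> u"
  shows "exp (-1/(2*((c+1)* s))) - exp (-1/((c+1)* s)) \<ge> 1 / (4*(c+1)*u)"
proof -
  have cs: "(c+1)* s > 0" "s + c * s > 0" using c s by (simp_all add: add_pos_pos)
  define w where "w = 1/(2*((c+1)* s))"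
  have w0: "w \<ge> 0" using c s by (simp add: w_def)
  have e1: "-1/(2*((c+1)* s)) = -w" by (simp add: w_def)
  have e2: "-1/((c+1)* s) = -2*w" using c s cs by (simp add: w_def field_simps)
  have "2*w \<le> 1/s" using c s cs by (simp add: w_def field_simps)
  then have "exp (-2*w) \<ge> exp (-1/s)" by simp
  moreover have "1 - 1/u \<ge> 1/2" using u by (simp add: field_simps)
  ultimately have pe: "exp (-2*w) \<ge> 1/2" using s(2) by linarith
  have "exp (-w) - exp (-2*w) \<ge> exp (-2*w) * w" by (rule exp_diff_lower[OF w0])
  also have "exp (-2*w) * w \<ge> (1/2) * w" using pe w0 by (intro mult_right_mono) auto
  also have "(1/2) * w = 1 / (4*(c+1)* s)" unfolding w_def using c s by simp
  also have "1 / (4*(c+1)* s) \<ge> 1 / (4*(c+1)*u)" using c s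
    by (intro divide_left_mono) (auto intro!: mult_pos_pos)
  finally show ?thesis unfolding e1 e2 by simp
qed




context frech begin

lemma ps: "prob_space M" by (rule prob_space_axioms)

lemma cdf1': "\<forall>x>0. cdf_of M e1 x = exp (- 1 / x)" by (rule cdf1)

lemma set1: "u > 1 \<Longrightarrow> {\<omega> \<in> space M. tail_Z M e1 u \<omega> > 0} = {\<omega> \<in> space M. e1 \<omega> > sfun u}"
  using tZ_set[OF ps m1 _ _, of 1 u] cdf1 by simp

lemma Z1_eq: "e1 \<omega> > 0 \<Longrightarrow> tail_Z M e1 u \<omega> = gfun (e1 \<omega>) - ln u"
  using tZ_eq[of 1 M e1 \<omega> u] cdf1 by simp

lemma Z2_eq: "X2 \<omega> > 0 \<Longrightarrow> tail_Z M X2 u \<omega> = gfun (X2 \<omega> / (c+1)) - ln u"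
  using tZ_eq[of "c+1" M X2 \<omega> u] cdf2 cpos by simp

lemma set2: "u > 1 \<Longrightarrow> {\<omega> \<in> space M. tail_Z M X2 u \<omega> > 0} = {\<omega> \<in> space M. X2 \<omega> > (c+1) * sfun u}"
  using tZ_set[OF ps X2m _ cdf2, of u] cpos by simp

lemma prob1: "u > 1 \<Longrightarrow> prob {\<omega> \<in> space M. e1 \<omega> > sfun u} = 1/u"
  using tZ_prob[OF ps m1 _ _, of 1 u] cdf1 by simp

lemma prob2: "u > 1 \<Longrightarrow> prob {\<omega> \<in> space M. X2 \<omega> > (c+1) * sfun u} = 1/u"
  using tZ_prob[OF ps X2m _ cdf2, of u] cpos by simp


lemma R21_point:
  assumes u: "u > 1" and w: "\<omega> \<in> space M"
  defines "S \<equiv> {\<omega> \<in> space M. e1 \<omega> > sfun u}"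
  shows "ennreal \<bar>tail_Z M X2 u \<omega> - (max (tail_Z M e1 u \<omega>) 0 + ln (c/(c+1)))\<bar>
            * indicator {\<omega> \<in> space M. tail_Z M e1 u \<omega> > 0} \<omega>
         \<le> ennreal (1/((c/(c+1)) * sfun u)) * indicator S \<omega>
            + (\<Sum>n. indicator (S \<inter> {\<omega> \<in> space M. c * sfun u * exp (real n) < e2 \<omega>}) \<omega>)"
proof (cases "\<omega> \<in> S")
  case False
  then show ?thesis using set1[OF u] by (simp add: S_def)
next
  case True
  define s where "s = sfun u"
  define x where "x = e1 \<omega>"
  define y where "y = e2 \<omega>"
  have s0: "s > 0" using s_props[OF u] by (simp add: s_def)
  have xs: "x > s" using True by (simp add: S_def x_def s_def)
  have x0: "x > 0" using xs s0 by simp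
  have Z1: "tail_Z M e1 u \<omega> = gfun x - ln u" using Z1_eq x0 by (simp add: x_def)
  have Z1p: "tail_Z M e1 u \<omega> > 0" using True set1[OF u] by (auto simp: S_def)
  have X2w: "X2 \<omega> = max (c*x) y" by (simp add: X2_def x_def y_def)
  have X2p: "X2 \<omega> > 0" using X2w cpos x0 by (smt (verit) mult_pos_pos)
  have Z2: "tail_Z M X2 u \<omega> = gfun (max (c*x) y / (c+1)) - ln u" using Z2_eq[OF X2p] X2w by simp
  have diff: "tail_Z M X2 u \<omega> - (max (tail_Z M e1 u \<omega>) 0 + ln (c/(c+1)))
      = gfun (max (c*x) y / (c+1)) - gfun x - ln (c/(c+1))" using Z1 Z2 Z1p by simp
  have kb: "\<bar>gfun (max (c*x) y / (c+1)) - gfun x - ln (c/(c+1))\<bar>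
     \<le> 1/((c/(c+1)) * s) + (if y > c * s then ln (y/(c * s)) else 0)"
    by (rule key21[OF cpos s0 xs])
  have L0: "0 \<le> (if y > c * s then ln (y/(c * s)) else 0)" using cpos s0 by (auto simp: field_simps)
  have C0: "0 \<le> 1/((c/(c+1)) * s)" using cpos s0 by simp
  have "ennreal \<bar>tail_Z M X2 u \<omega> - (max (tail_Z M e1 u \<omega>) 0 + ln (c/(c+1)))\<bar>
      \<le> ennreal (1/((c/(c+1)) * s) + (if y > c * s then ln (y/(c * s)) else 0))"
    using kb diff by (intro ennreal_leI) simp
  also have "\<dots> = ennreal (1/((c/(c+1)) * s)) + ennreal (if y > c * s then ln (y/(c * s)) else 0)"
    using C0 L0 by (rule ennreal_plus)
  also have "ennreal (if y > c * s then ln (y/(c * s)) else 0)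
      \<le> (\<Sum>n. ennreal (if c * s * exp (real n) < y then 1 else 0))"
    by (rule ln_count[OF mult_pos_pos[OF cpos s0]])
  also have "(\<Sum>n. ennreal (if c * s * exp (real n) < y then 1 else 0))
      = (\<Sum>n. indicator (S \<inter> {\<omega> \<in> space M. c * sfun u * exp (real n) < e2 \<omega>}) \<omega>)"
    using True w by (intro arg_cong[where f=suminf] ext) (auto simp: indicator_def y_def s_def)
  finally show ?thesis using True Z1p w by (simp add: s_def add_mono)
qed

end



context frech begin

lemma R21_bound:
  assumes u: "u > 1"
  shows "tail_risk M (tail_Z M X2 u) (tail_Z M e1 u)
     \<le> ennreal ((1/(c/(c+1)) + (1/(1 - exp (-1)))/c) / sfun u)"
proof -
  define s where "s = sfun u"
  have s0: "s > 0" using s_props[OF u] by (simp add: s_def)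
  define S where "S = {\<omega> \<in> space M. e1 \<omega> > s}"
  define E where "E n = {\<omega> \<in> space M. c * s * exp (real n) < e2 \<omega>}" for n :: nat
  define C where "C = 1/((c/(c+1)) * s)"
  define G where "G = 1/(1 - exp (-1::real))"
  define q where "q = exp (-1::real)"
  have q: "0 \<le> q" "q < 1" by (auto simp: q_def)
  have SM[measurable]: "S \<in> sets M" unfolding S_def by measurable
  have EM[measurable]: "E n \<in> sets M" for n unfolding E_def by measurable
  have pS: "prob S = 1/u" using prob1[OF u] by (simp add: S_def s_def)
  have eS: "emeasure M S = ennreal (1/u)" using pS emeasure_eq_measure by simp
  have pE: "prob (S \<inter> E n) \<le> (1/u) * ((1/(c * s)) * q ^ n)" for n
  proof -
    define r where "r = c * s * exp (real n)"
    have r0: "r > 0" using cpos s0 by (simp add: r_def)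
    have "S \<inter> E n = {\<omega> \<in> space M. e1 \<omega> \<in> {s<..} \<and> e2 \<omega> \<in> {r<..}}"
      by (auto simp: S_def E_def r_def)
    then have "prob (S \<inter> E n) = prob {\<omega> \<in> space M. e1 \<omega> \<in> {s<..}} * prob {\<omega> \<in> space M. e2 \<omega> \<in> {r<..}}"
      using indep_prob[of "{s<..}" "{r<..}"] by simp
    also have "prob {\<omega> \<in> space M. e1 \<omega> \<in> {s<..}} = 1/u" using pS by (simp add: S_def)
    finally have eq: "prob (S \<inter> E n) = 1/u * prob {\<omega> \<in> space M. e2 \<omega> \<in> {r<..}}" .
    have "prob {\<omega> \<in> space M. e2 \<omega> \<in> {r<..}} = 1 - exp (-1/r)"
      using frechet_tail[OF ps m2 F2 r0] by simp
    also have "1 - exp (-1/r) \<le> 1/r" using exp_ge_add_one_self[of "-1/r"] by simp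
    also have "1/r = (1/(c * s)) * q ^ n"
    proof -
      have "q ^ n = exp (real n * (-1))" unfolding q_def by (rule exp_of_nat_mult[symmetric])
      also have "\<dots> = 1 / exp (real n)" by (simp add: exp_minus field_simps)
      finally show ?thesis by (simp add: r_def)
    qed
    finally have "prob {\<omega> \<in> space M. e2 \<omega> \<in> {r<..}} \<le> (1/(c * s)) * q ^ n" .
    then show ?thesis unfolding eq using u by (intro mult_left_mono) auto
  qed
  have h0: "(\<lambda>z. max z 0 + ln (c/(c+1))) \<in> envelope_class"
    unfolding envelope_class_def by auto
  have "(\<integral>\<^sup>+ \<omega>. ennreal \<bar>tail_Z M X2 u \<omega> - (max (tail_Z M e1 u \<omega>) 0 + ln (c/(c+1)))\<bar>
            * indicator {\<omega> \<in> space M. tail_Z M e1 u \<omega> > 0} \<omega> \<partial>M)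
      \<le> (\<integral>\<^sup>+ \<omega>. ennreal C * indicator S \<omega> + (\<Sum>n. indicator (S \<inter> E n) \<omega>) \<partial>M)"
    by (intro nn_integral_mono) (use R21_point[OF u] in \<open>simp add: S_def E_def C_def s_def\<close>)
  also have "\<dots> = ennreal C * emeasure M S + (\<Sum>n. emeasure M (S \<inter> E n))"
    by (subst nn_integral_add) (auto simp: nn_integral_suminf nn_integral_cmult_indicator)
  also have "(\<Sum>n. emeasure M (S \<inter> E n)) \<le> (\<Sum>n. ennreal ((1/u) * ((1/(c * s)) * q ^ n)))"
  proof (rule suminf_le)
    fix n show "emeasure M (S \<inter> E n) \<le> ennreal ((1/u) * ((1/(c * s)) * q ^ n))"
      unfolding emeasure_eq_measure by (rule ennreal_leI[OF pE])
  qed auto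
  also have "(\<Sum>n. ennreal ((1/u) * ((1/(c * s)) * q ^ n))) = ennreal (\<Sum>n. (1/u) * ((1/(c * s)) * q ^ n))"
    using q u cpos s0 by (intro suminf_ennreal2) (auto intro!: summable_mult summable_geometric)
  also have "(\<Sum>n. (1/u) * ((1/(c * s)) * q ^ n)) = (1/u) * ((1/(c * s)) * G)"
  proof -
    have sq: "summable (\<lambda>n. q ^ n)" using q by (intro summable_geometric) auto
    have "(\<Sum>n. (1/u) * ((1/(c * s)) * q ^ n)) = (\<Sum>n. ((1/u) * (1/(c * s))) * q ^ n)"
      by (simp add: mult.assoc)
    also have "\<dots> = ((1/u) * (1/(c * s))) * (\<Sum>n. q ^ n)" by (rule suminf_mult[OF sq])
    also have "(\<Sum>n. q ^ n) = G" using q by (simp add: suminf_geometric G_def q_def)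
    finally show ?thesis by simp
  qed
  also have "ennreal C * emeasure M S = ennreal (C * (1/u))" unfolding eS using cpos s0 u
    by (intro ennreal_mult[symmetric]) (auto simp: C_def)
  also have "ennreal (C * (1/u)) + ennreal ((1/u) * ((1/(c * s)) * G)) = ennreal ((1/u) * (C + G/(c * s)))"
    using cpos s0 u q by (subst ennreal_plus[symmetric]) (auto simp: C_def G_def algebra_simps)
  finally have num: "(\<integral>\<^sup>+ \<omega>. ennreal \<bar>tail_Z M X2 u \<omega> - (max (tail_Z M e1 u \<omega>) 0 + ln (c/(c+1)))\<bar>
            * indicator {\<omega> \<in> space M. tail_Z M e1 u \<omega> > 0} \<omega> \<partial>M) \<le> ennreal ((1/u) * (C + G/(c * s)))"
    by simp
  have den: "emeasure M {\<omega> \<in> space M. tail_Z M e1 u \<omega> > 0} = ennreal (1/u)"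
    using set1[OF u] eS by (simp add: S_def s_def)
  have "tail_risk M (tail_Z M X2 u) (tail_Z M e1 u) \<le> ennreal ((1/u) * (C + G/(c * s))) / ennreal (1/u)"
    unfolding tail_risk_def
    by (rule INF_lower2[OF h0]) (simp only: den, rule divide_right_mono_ennreal[OF num])
  also have "\<dots> = ennreal (C + G/(c * s))"
    using u cpos s0 by (subst divide_ennreal) (auto simp: C_def G_def)
  also have "C + G/(c * s) = (1/(c/(c+1)) + (1/(1 - exp (-1)))/c) / sfun u"
  proof -
    have a: "C = (1/(c/(c+1)))/s" by (simp add: C_def divide_divide_eq_left)
    have b: "G/(c * s) = (G/c)/s" by (simp add: divide_divide_eq_left)
    show ?thesis unfolding a b add_divide_distrib[symmetric] by (simp add: G_def s_def)
  qed
  finally show ?thesis .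
qed

end



context frech begin

lemma Z2_bounds:
  assumes u: "u \<ge> 2" and w: "(c+1) * sfun u < X2 \<omega>" "X2 \<omega> \<le> 2 * ((c+1) * sfun u)"
  shows "0 < tail_Z M X2 u \<omega>" "tail_Z M X2 u \<omega> \<le> ln 2 + 1"
proof -
  have u1: "u > 1" using u by simp
  note sp = s_props[OF u1]
  define s where "s = sfun u"
  have s0: "s > 0" and s1: "s \<ge> 1" using sp u by (auto simp: s_def)
  have c1: "c + 1 > 0" using cpos by simp
  define z where "z = X2 \<omega> / (c+1)"
  have zs: "s < z" "z \<le> 2 * s" using w c1 by (auto simp: z_def s_def field_simps)
  have z0: "z > 0" using zs s0 by simp
  have X2p: "X2 \<omega> > 0" using w c1 s0 by (smt (verit) mult_pos_pos s_def)
  have Z2: "tail_Z M X2 u \<omega> = gfun z - ln u" using Z2_eq[OF X2p] by (simp add: z_def)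
  have gs: "gfun s = ln u" using sp by (simp add: s_def)
  have "gfun s < gfun z" by (rule gfun_less[OF s0 zs(1)])
  then show "0 < tail_Z M X2 u \<omega>" using Z2 gs by simp
  have gz: "gfun z \<le> ln z + 1/z" using g_bounds[OF z0] by simp
  have "ln z \<le> ln (2 * s)" using zs z0 by simp
  also have "ln (2 * s) = ln 2 + ln s" using s0 by (simp add: ln_mult)
  finally have lz: "ln z \<le> ln 2 + ln s" .
  have lns: "ln s \<le> ln u" using g_bounds(1)[OF s0] gs by simp
  have "1/z \<le> 1" using zs s1 by (simp add: field_simps)
  then show "tail_Z M X2 u \<omega> \<le> ln 2 + 1" using Z2 gz lz lns by linarith
qed

lemma h_bounds:
  fixes c' d z D :: real
  assumes "0 < z" "z \<le> D"
  shows "max 0 c' + d \<le> max z c' + d" "max z c' + d \<le> max 0 c' + d + D"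
  using assms by (auto simp: max_def)


lemma R12_point:
  fixes c' d :: real
  assumes u: "u \<ge> 2" and w: "\<omega> \<in> space M"
  defines "t \<equiv> (c+1) * sfun u"
  defines "A \<equiv> {\<omega> \<in> space M. e1 \<omega> \<in> {t/c<..2*t/c} \<and> e2 \<omega> \<in> {..t}}"
    and "B \<equiv> {\<omega> \<in> space M. e1 \<omega> \<in> {1/2<..1} \<and> e2 \<omega> \<in> {t<..2*t}}"
    and "m \<equiv> max 0 c' + d"
  shows "ennreal (max 0 (-(m + (ln 2 + 1)))) * indicator A \<omega> + ennreal (max 0 (m - 2 + ln u)) * indicator B \<omega>
     \<le> ennreal \<bar>tail_Z M e1 u \<omega> - (max (tail_Z M X2 u \<omega>) c' + d)\<bar>
            * indicator {\<omega> \<in> space M. tail_Z M X2 u \<omega> > 0} \<omega>"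
proof -
  have u1: "u > 1" using u by simp
  note sp = s_props[OF u1]
  define s where "s = sfun u"
  have s0: "s > 0" and s1: "s \<ge> 1" using sp u by (auto simp: s_def)
  have ts: "t = (c+1) * s" by (simp add: t_def s_def)
  have "(c+1)*1 \<le> (c+1)* s" using s1 cpos by (intro mult_left_mono) auto
  then have tc: "c < t" using ts by simp
  have tcs: "s < t/c" using ts cpos s0 by (simp add: field_simps)
  let ?Z1 = "tail_Z M e1 u \<omega>" and ?Z2 = "tail_Z M X2 u \<omega>"
  let ?h = "max ?Z2 c' + d"
  show ?thesis
  proof (cases "\<omega> \<in> A")
    case True
    then have notB: "\<omega> \<notin> B" by (auto simp: A_def B_def)
    have e1: "t/c < e1 \<omega>" "e1 \<omega> \<le> 2*t/c" and e2: "e2 \<omega> \<le> t" using True by (auto simp: A_def)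
    have ce1: "t < c * e1 \<omega>" "c * e1 \<omega> \<le> 2 * t" using e1 cpos by (auto simp: field_simps)
    have X2w: "X2 \<omega> = c * e1 \<omega>" using e2 ce1 by (simp add: X2_def)
    have zb: "0 < ?Z2" "?Z2 \<le> ln 2 + 1" using Z2_bounds[OF u, of \<omega>] X2w ce1 by (auto simp: t_def)
    have hb: "?h \<le> m + (ln 2 + 1)" using h_bounds(2)[OF zb, of c' d] by (simp add: m_def)
    have es: "s < e1 \<omega>" using tcs e1 by simp
    have e10: "e1 \<omega> > 0" using es s0 by simp
    have "gfun s < gfun (e1 \<omega>)" by (rule gfun_less[OF s0 es])
    then have Z1p: "?Z1 > 0" using Z1_eq[OF e10] sp by (simp add: s_def)
    have "max 0 (-(m + (ln 2 + 1))) \<le> \<bar>?Z1 - ?h\<bar>" using hb Z1p by simp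
    then show ?thesis using True notB zb w by (simp add: ennreal_leI)
  next
    case notA: False
    show ?thesis
    proof (cases "\<omega> \<in> B")
      case True
      have e1: "1/2 < e1 \<omega>" "e1 \<omega> \<le> 1" and e2: "t < e2 \<omega>" "e2 \<omega> \<le> 2*t"
        using True by (auto simp: B_def)
      have "c * e1 \<omega> \<le> c" using e1 cpos by simp
      then have X2w: "X2 \<omega> = e2 \<omega>" using e2 tc by (simp add: X2_def)
      have zb: "0 < ?Z2" "?Z2 \<le> ln 2 + 1" using Z2_bounds[OF u, of \<omega>] X2w e2 by (auto simp: t_def)
      have hb: "m \<le> ?h" using h_bounds(1)[OF zb, of c' d] by (simp add: m_def)
      have e10: "e1 \<omega> > 0" using e1 by simp
      have "gfun (e1 \<omega>) \<le> ln (e1 \<omega>) + 1/(e1 \<omega>)" using g_bounds(2)[OF e10] .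
      moreover have "ln (e1 \<omega>) \<le> 0" using e1 by simp
      moreover have "1/(e1 \<omega>) \<le> 2" using e1 by (simp add: field_simps)
      ultimately have "gfun (e1 \<omega>) \<le> 2" by linarith
      then have Z1b: "?Z1 \<le> 2 - ln u" using Z1_eq[OF e10] by simp
      have "max 0 (m - 2 + ln u) \<le> \<bar>?Z1 - ?h\<bar>" using hb Z1b by simp
      then show ?thesis using True notA zb w by (simp add: ennreal_leI)
    next
      case False
      then show ?thesis using notA by simp
    qed
  qed
qed

end



context frech begin

definition pc where "pc = min ((c/(c+1))/4) ((exp (-1) - exp (-2))/(4*(c+1)))"

lemma pc_pos: "pc > 0"
proof -
  have "exp (-2::real) < exp (-1)" by simp
  then show ?thesis using cpos by (simp add: pc_def)
qed

lemma R12_bound: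
  assumes u: "u \<ge> 2" and lu: "ln u \<ge> 2 + (ln 2 + 1)"
  shows "ennreal (pc * (ln u - 2 - (ln 2 + 1))) \<le> tail_risk M (tail_Z M e1 u) (tail_Z M X2 u)"
proof -
  have u1: "u > 1" using u by simp
  note sp = s_props[OF u1]
  define s where "s = sfun u"
  have s0: "s > 0" and s1: "s \<ge> 1" and su: "s \<le> u" and es: "exp (-1/s) = 1 - 1/u"
    using sp u by (auto simp: s_def)
  define t where "t = (c+1) * s"
  have t0: "t > 0" using cpos s0 by (simp add: t_def)
  define A where "A = {\<omega> \<in> space M. e1 \<omega> \<in> {t/c<..2*t/c} \<and> e2 \<omega> \<in> {..t}}"
  define B where "B = {\<omega> \<in> space M. e1 \<omega> \<in> {1/2<..1} \<and> e2 \<omega> \<in> {t<..2*t}}"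
  have AM[measurable]: "A \<in> sets M" unfolding A_def by measurable
  have BM[measurable]: "B \<in> sets M" unfolding B_def by measurable
  have PA: "prob A \<ge> pc / u"
  proof -
    have "prob A = prob {\<omega> \<in> space M. e1 \<omega> \<in> {t/c<..2*t/c}} * prob {\<omega> \<in> space M. e2 \<omega> \<in> {..t}}"
      unfolding A_def by (rule indep_prob) auto
    also have "prob {\<omega> \<in> space M. e1 \<omega> \<in> {t/c<..2*t/c}} = exp (-1/(2*t/c)) - exp (-1/(t/c))"
      using frechet_interval[OF ps m1 F1, of "t/c" "2*t/c"] t0 cpos by (simp add: field_simps)
    also have "prob {\<omega> \<in> space M. e2 \<omega> \<in> {..t}} = exp (-1/t)" using F2 t0 by simp
    finally have "prob A = exp (-1/t) * (exp (-1/(2*t/c)) - exp (-1/(t/c)))" by simp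
    also have "\<dots> \<ge> (c/(c+1)) / (4*u)"
      using PA_bound[OF cpos u s0 es su] by (simp add: t_def)
    finally have "prob A \<ge> (c/(c+1)) / (4*u)" .
    moreover have "(c/(c+1)) / (4*u) = ((c/(c+1))/4) / u" by simp
    moreover have "((c/(c+1))/4) / u \<ge> pc / u" using u by (intro divide_right_mono) (auto simp: pc_def)
    ultimately show ?thesis by (metis order_trans)
  qed
  have PB: "prob B \<ge> pc / u"
  proof -
    have "prob B = prob {\<omega> \<in> space M. e1 \<omega> \<in> {1/2<..1}} * prob {\<omega> \<in> space M. e2 \<omega> \<in> {t<..2*t}}"
      unfolding B_def by (rule indep_prob) auto
    also have "prob {\<omega> \<in> space M. e1 \<omega> \<in> {1/2<..1}} = exp (-1) - exp (-2)"
      using frechet_interval[OF ps m1 F1, of "1/2" "1"] by simp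
    also have "prob {\<omega> \<in> space M. e2 \<omega> \<in> {t<..2*t}} = exp (-1/(2*t)) - exp (-1/t)"
      using frechet_interval[OF ps m2 F2, of t "2*t"] t0 by simp
    finally have eq: "prob B = (exp (-1) - exp (-2)) * (exp (-1/(2*t)) - exp (-1/t))" .
    have q0: "exp (-2::real) < exp (-1)" by simp
    have "exp (-1/(2*t)) - exp (-1/t) \<ge> 1 / (4*(c+1)*u)"
      using PB_bound[OF cpos u s0 es su] by (simp add: t_def)
    then have "prob B \<ge> (exp (-1) - exp (-2)) * (1 / (4*(c+1)*u))"
    proof -
      have q1: "0 \<le> exp (-1) - exp (-2::real)" using q0 by linarith
      show ?thesis unfolding eq by (rule mult_left_mono[OF _ q1]) fact
    qed
    moreover have "(exp (-1) - exp (-2)) * (1 / (4*(c+1)*u)) = ((exp (-1) - exp (-2))/(4*(c+1))) / u"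
      by simp
    moreover have "((exp (-1) - exp (-2))/(4*(c+1))) / u \<ge> pc / u" using u by (intro divide_right_mono) (auto simp: pc_def)
    ultimately show ?thesis by (metis order_trans)
  qed
  have den: "emeasure M {\<omega> \<in> space M. tail_Z M X2 u \<omega> > 0} = ennreal (1/u)"
    using set2[OF u1] prob2[OF u1] emeasure_eq_measure by simp
  define L where "L = ln u - 2 - (ln 2 + 1)"
  have L0: "L \<ge> 0" using lu by (simp add: L_def)
  show ?thesis unfolding tail_risk_def
  proof (rule INF_greatest)
    fix h assume "h \<in> envelope_class"
    then obtain c' d where h: "h = (\<lambda>z. max z c' + d)" by (auto simp: envelope_class_def)
    define m where "m = max 0 c' + d"
    define \<alpha> where "\<alpha> = max 0 (-(m + (ln 2 + 1)))"
    define \<beta> where "\<beta> = max 0 (m - 2 + ln u)"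
    have ab: "\<alpha> \<ge> 0" "\<beta> \<ge> 0" "\<alpha> + \<beta> \<ge> L" by (auto simp: \<alpha>_def \<beta>_def L_def)
    have I1: "(\<integral>\<^sup>+ \<omega>. ennreal \<alpha> * indicator A \<omega> + ennreal \<beta> * indicator B \<omega> \<partial>M)
       \<le> (\<integral>\<^sup>+ \<omega>. ennreal \<bar>tail_Z M e1 u \<omega> - h (tail_Z M X2 u \<omega>)\<bar>
            * indicator {\<omega> \<in> space M. tail_Z M X2 u \<omega> > 0} \<omega> \<partial>M)"
      by (intro nn_integral_mono)
         (use R12_point[OF u, of _ c' d] in \<open>simp add: h A_def B_def t_def s_def \<alpha>_def \<beta>_def m_def\<close>)
    have I2: "(\<integral>\<^sup>+ \<omega>. ennreal \<alpha> * indicator A \<omega> + ennreal \<beta> * indicator B \<omega> \<partial>M)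
        = ennreal \<alpha> * emeasure M A + ennreal \<beta> * emeasure M B"
      by (subst nn_integral_add) (auto simp: nn_integral_cmult_indicator)
    have I3: "ennreal \<alpha> * emeasure M A + ennreal \<beta> * emeasure M B = ennreal (\<alpha> * prob A + \<beta> * prob B)"
    proof -
      have 1: "ennreal \<alpha> * emeasure M A = ennreal (\<alpha> * prob A)"
        unfolding emeasure_eq_measure using ab by (intro ennreal_mult[symmetric]) auto
      have 2: "ennreal \<beta> * emeasure M B = ennreal (\<beta> * prob B)"
        unfolding emeasure_eq_measure using ab by (intro ennreal_mult[symmetric]) auto
      show ?thesis unfolding 1 2 using ab by (intro ennreal_plus[symmetric]) auto
    qed
    have I4: "\<alpha> * prob A + \<beta> * prob B \<ge> (pc/u) * L"
    proof -
      have "\<alpha> * prob A \<ge> \<alpha> * (pc/u)" using PA ab by (intro mult_left_mono) auto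
      moreover have "\<beta> * prob B \<ge> \<beta> * (pc/u)" using PB ab by (intro mult_left_mono) auto
      moreover have "(\<alpha> + \<beta>) * (pc/u) \<ge> L * (pc/u)" using ab pc_pos u by (intro mult_right_mono) auto
      ultimately show ?thesis using distrib_right[of \<alpha> \<beta> "pc/u"] mult.commute[of "pc/u" L] by linarith
    qed
    have "ennreal ((pc/u) * L) \<le> ennreal (\<alpha> * prob A + \<beta> * prob B)" using I4 by (rule ennreal_leI)
    also note I3[symmetric]
    also note I2[symmetric]
    also note I1
    finally have num: "ennreal ((pc/u) * L) \<le> (\<integral>\<^sup>+ \<omega>. ennreal \<bar>tail_Z M e1 u \<omega> - h (tail_Z M X2 u \<omega>)\<bar>
            * indicator {\<omega> \<in> space M. tail_Z M X2 u \<omega> > 0} \<omega> \<partial>M)"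
      .
    have "ennreal (pc * L) = ennreal ((pc/u) * L) / ennreal (1/u)"
      using u pc_pos L0 by (subst divide_ennreal) (auto simp: field_simps)
    also have "\<dots> \<le> (\<integral>\<^sup>+ \<omega>. ennreal \<bar>tail_Z M e1 u \<omega> - h (tail_Z M X2 u \<omega>)\<bar>
            * indicator {\<omega> \<in> space M. tail_Z M X2 u \<omega> > 0} \<omega> \<partial>M)
          / emeasure M {\<omega> \<in> space M. tail_Z M X2 u \<omega> > 0}"
      unfolding den by (rule divide_right_mono_ennreal[OF num])
    finally show "ennreal (pc * (ln u - 2 - (ln 2 + 1))) \<le> (\<integral>\<^sup>+ \<omega>. ennreal \<bar>tail_Z M e1 u \<omega> - h (tail_Z M X2 u \<omega>)\<bar>
            * indicator {\<omega> \<in> space M. tail_Z M X2 u \<omega> > 0} \<omega> \<partial>M)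
          / emeasure M {\<omega> \<in> space M. tail_Z M X2 u \<omega> > 0}" by (simp add: L_def)
  qed
qed

end



context frech begin

lemma final:
  shows "((\<lambda>u. tail_risk M (tail_Z M X2 u) (tail_Z M e1 u)) \<longlongrightarrow> 0) at_top
     \<and> Liminf at_top (\<lambda>u. tail_risk M (tail_Z M e1 u) (tail_Z M X2 u)) \<ge> ennreal (ln 2 / (c + 1))
     \<and> (\<forall>\<^sub>F u in at_top. tail_risk M (tail_Z M X2 u) (tail_Z M e1 u) < tail_risk M (tail_Z M e1 u) (tail_Z M X2 u))"
proof -
  define R21 where "R21 u = tail_risk M (tail_Z M X2 u) (tail_Z M e1 u)" for u
  define R12 where "R12 u = tail_risk M (tail_Z M e1 u) (tail_Z M X2 u)" for u
  define K where "K = (1/(c/(c+1)) + (1/(1 - exp (-1::real)))/c)"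
  have K0: "K \<ge> 0" using cpos by (simp add: K_def)
  have up: "\<forall>\<^sub>F u in at_top. R21 u \<le> ennreal (K / (u - 1))"
    using eventually_gt_at_top[of 2]
  proof eventually_elim
    case (elim u)
    then have u1: "u > 1" by simp
    have "R21 u \<le> ennreal (K / sfun u)" using R21_bound[OF u1] by (simp add: R21_def K_def)
    also have "K / sfun u \<le> K / (u - 1)" using s_props[OF u1] elim K0
      by (intro divide_left_mono) (auto intro!: mult_pos_pos)
    finally show ?case by (simp add: ennreal_leI)
  qed
  have lim0: "((\<lambda>u. K / (u - 1)) \<longlongrightarrow> 0) at_top" by real_asymp
  have T1: "(R21 \<longlongrightarrow> 0) at_top"
  proof (rule tendsto_sandwich[of "\<lambda>_. 0" R21 at_top "\<lambda>u. ennreal (K / (u - 1))"])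
    show "((\<lambda>u. ennreal (K / (u - 1))) \<longlongrightarrow> 0) at_top"
      using tendsto_ennrealI[OF lim0] by simp
  qed (use up in auto)
  define Bd where "Bd = ln 2 / (c+1) + 1"
  have "ln 2 / (c+1) > 0" using cpos by (intro divide_pos_pos) auto
  then have Bd0: "Bd > 0" by (simp add: Bd_def)
  define Lam where "Lam = Bd / pc + 2 + (ln 2 + 1)"
  have lb: "\<forall>\<^sub>F u in at_top. ennreal Bd \<le> R12 u"
    using eventually_ge_at_top[of 2] eventually_ge_at_top[of "exp Lam"]
  proof eventually_elim
    case (elim u)
    have u0: "u > 0" using elim by simp
    have "ln (exp Lam) \<le> ln u" using elim u0 by (subst ln_le_cancel_iff) auto
    then have lu: "ln u \<ge> Lam" by simp
    have "Bd / pc \<ge> 0" using Bd0 pc_pos by simp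
    then have lu2: "ln u \<ge> 2 + (ln 2 + 1)" using lu by (simp add: Lam_def)
    have "Bd = pc * (Bd / pc)" using pc_pos by simp
    also have "\<dots> \<le> pc * (ln u - 2 - (ln 2 + 1))" using lu pc_pos
      by (intro mult_left_mono) (auto simp: Lam_def)
    finally have "ennreal Bd \<le> ennreal (pc * (ln u - 2 - (ln 2 + 1)))" by (rule ennreal_leI)
    also have "\<dots> \<le> R12 u" using R12_bound[OF elim(1) lu2] by (simp add: R12_def)
    finally show ?case .
  qed
  have T2: "Liminf at_top R12 \<ge> ennreal (ln 2 / (c + 1))"
  proof (rule Liminf_bounded)
    show "\<forall>\<^sub>F u in at_top. ennreal (ln 2 / (c + 1)) \<le> R12 u"
      using lb
    proof eventually_elim
      case (elim u)
      have "ennreal (ln 2 / (c + 1)) \<le> ennreal Bd" by (intro ennreal_leI) (simp add: Bd_def)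
      then show ?case using elim by (rule order_trans)
    qed
  qed
  have "\<forall>\<^sub>F u in at_top. R21 u < ennreal Bd"
    using order_tendstoD(2)[OF T1] Bd0 by simp
  then have T3: "\<forall>\<^sub>F u in at_top. R21 u < R12 u"
    using lb by eventually_elim (rule less_le_trans)
  show ?thesis using T1 T2 T3 unfolding R21_def R12_def by simp
qed

end


theorem theorem1:
  fixes M :: "'a measure" and e1 e2 :: "'a \<Rightarrow> real" and c :: real
    and X1 X2 :: "'a \<Rightarrow> real" and R21 R12 :: "real \<Rightarrow> ennreal"
  assumes "prob_space M"
    and "e1 \<in> borel_measurable M" and "e2 \<in> borel_measurable M"
    and "prob_space.indep_var M borel e1 borel e2"
    and "\<forall>x>0. measure M {\<omega> \<in> space M. e1 \<omega> \<le> x} = exp (- 1 / x)"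
    and "\<forall>x>0. measure M {\<omega> \<in> space M. e2 \<omega> \<le> x} = exp (- 1 / x)"
    and "c > 0"
  defines "X1 \<equiv> e1"
    and "X2 \<equiv> (\<lambda>\<omega>. max (c * X1 \<omega>) (e2 \<omega>))"
    and "R21 \<equiv> (\<lambda>u. tail_risk M (tail_Z M X2 u) (tail_Z M X1 u))"
    and "R12 \<equiv> (\<lambda>u. tail_risk M (tail_Z M X1 u) (tail_Z M X2 u))"
  shows "(R21 \<longlongrightarrow> 0) at_top
         \<and> Liminf at_top R12 \<ge> ennreal (ln 2 / (c + 1))
         \<and> (\<forall>\<^sub>F u in at_top. R21 u < R12 u)"
proof -
  have fr: "frech M e1 e2 c"
    unfolding frech_def frech_axioms_def using assms(1-7) by auto
  have x2: "frech.X2 e1 e2 c = (\<lambda>\<omega>. max (c * e1 \<omega>) (e2 \<omega>))"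
    using frech.X2_def[OF fr] by simp
  show ?thesis using frech.final[OF fr]
    unfolding R21_def R12_def X2_def X1_def x2 by simp
qed

end
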